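(* Let $p,q\geq 2$ be relatively prime integers. For every $c\in A_{pq}^{\mathbb{Z}}$ and all $k,i\in\mathbb{Z}$, the value $F_{p,q}^k(c)(i)$ is uniquely determined by the three values $F_{p,q}^{k-1}(c)(i+1)$, $F_{p,q}^{k}(c)(i+1)$ and $F_{p,q}^{k+1}(c)(i+1)$; that is, if $c,c'\in A_{pq}^{\mathbb{Z}}$ satisfy $F_{p,q}^{m}(c)(i+1)=F_{p,q}^{m}(c')(i+1)$ for $m\in\{k-1,k,k+1\}$, then $F_{p,q}^k(c)(i)=F_{p,q}^k(c')(i)$.
   Context: For an integer $n>1$, $A_n=\{0,1,\dots,n-1\}$. For relatively prime integers $p,q\geq2$ define $g_{p,q}:A_{pq}\times A_{pq}\to A_{pq}$ by writing $x=x_1q+x_0$, $y=y_1q+y_0$ with $x_0,y_0\in A_q$, $x_1,y_1\in A_p$ (uniquely), and setting $g_{p,q}(x,y)=x_0p+y_1$. Define $F_{p,q}:A_{pq}^{\mathbb{Z}}\to A_{pq}^{\mathbb{Z}}$ by $F_{p,q}(c)(i)=g_{p,q}\big(g_{p,q}(c(i-1),c(i)),\,g_{p,q}(c(i),c(i+1))\big)$. The map $F_{p,q}$ is a bijection whose inverse is $F_{q,p}$ (defined by the same formulas with the roles of $p$ and $q$ exchanged); $F_{p,q}^k$ for negative $k$ denotes iterates of the inverse. *)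

theory Defs
  imports Main
begin

text \<open>Local rule g_{p,q} on A_{pq} = {0..<p*q}: write x = x1*q + x0, y = y1*q + y0
  with x0,y0 < q, x1,y1 < p; then g(x,y) = x0*p + y1.\<close>
definition g :: "nat \<Rightarrow> nat \<Rightarrow> nat \<Rightarrow> nat \<Rightarrow> nat" where
  "g p q x y = (x mod q) * p + y div q"

definition F :: "nat \<Rightarrow> nat \<Rightarrow> (int \<Rightarrow> nat) \<Rightarrow> (int \<Rightarrow> nat)" where
  "F p q c = (\<lambda>i. g p q (g p q (c (i - 1)) (c i)) (g p q (c i) (c (i + 1))))"

text \<open>Integer iterates: F^k for k >= 0, and iterates of the inverse F_{q,p} for k < 0.\<close>
definition Fpow :: "nat \<Rightarrow> nat \<Rightarrow> int \<Rightarrow> (int \<Rightarrow> nat) \<Rightarrow> (int \<Rightarrow> nat)" where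
  "Fpow p q k c = (if 0 \<le> k then (F p q ^^ nat k) c else (F q p ^^ nat (- k)) c)"

end

theory Submission
  imports Defs "HOL-Number_Theory.Number_Theory"
begin

lemma g_bound: "0 < q \<Longrightarrow> y < p*q \<Longrightarrow> g p q x y < p*q"
proof -
  assume q: "0 < q" and y: "y < p*q"
  have a: "x mod q \<le> q - 1" using q by (simp add: less_Suc_eq_le[symmetric])
  have b: "y div q \<le> p - 1" using y q
    by (metis Suc_pred' div_less_iff_less_mult less_Suc_eq_le mult.commute not_gr_zero mult_0 not_less0)
  have "g p q x y \<le> (q-1)*p + (p-1)" unfolding g_def using a b
    by (meson add_le_mono mult_le_mono1)
  also have "\<dots> < p*q" using q y
    by (cases p; cases q) (auto simp: algebra_simps)
  finally show ?thesis .
qed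

lemma g_mod_p: "0 < q \<Longrightarrow> y < p*q \<Longrightarrow> g p q x y mod p = y div q"
  unfolding g_def
  by (simp add: div_less_iff_less_mult mult.commute)

lemma g_div_p: "0 < q \<Longrightarrow> y < p*q \<Longrightarrow> g p q x y div p = x mod q"
proof -
  assume q: "0 < q" and y: "y < p*q"
  have yl: "y div q < p" using q y by (simp add: div_less_iff_less_mult mult.commute)
  hence p: "0 < p" by simp
  have "((x mod q) * p + y div q) div p = x mod q + (y div q) div p"
    using p by simp
  thus ?thesis unfolding g_def using yl by simp
qed

lemma crt:
  fixes p q a b :: nat
  assumes "coprime p q" "a < p*q" "b < p*q" "a mod p = b mod p" "a mod q = b mod q"
  shows "a = b"
proof -
  have "[a = b] (mod p*q)"
    using assms coprime_cong_mult_nat[of a b p q] by (simp add: cong_def)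
  thus ?thesis using assms cong_less_modulus_unique_nat by blast
qed

lemma F_bound:
  assumes "0 < q" "\<forall>j. x j < p*q" shows "\<forall>j. F p q x j < p*q"
  using assms unfolding F_def by (simp add: g_bound)

lemma F_bound':
  assumes "0 < p" "\<forall>j. x j < p*q" shows "\<forall>j. F q p x j < p*q"
  using F_bound[of p x q] assms by (simp add: mult.commute)

lemma pow_bound:
  assumes "0 < q" "\<forall>j. x j < p*q" shows "\<forall>j. (F p q ^^ n) x j < p*q"
  using assms by (induction n) (auto simp: F_bound)

lemma pow_bound':
  assumes "0 < p" "\<forall>j. x j < p*q" shows "\<forall>j. (F q p ^^ n) x j < p*q"
  using assms by (induction n) (auto simp: F_bound')

lemma key_u:
  assumes cp: "coprime p q" and pq: "0 < p" "0 < q"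
    and bx: "\<forall>j. x j < p*q" and bx': "\<forall>j. x' j < p*q"
    and e1: "x (i+1) = x' (i+1)" and e2: "F p q x (i+1) = F p q x' (i+1)"
  shows "g p q (x i) (x (i+1)) = g p q (x' i) (x' (i+1))"
proof (rule crt[OF cp])
  show "g p q (x i) (x (i+1)) < p*q" using bx pq by (simp add: g_bound)
  show "g p q (x' i) (x' (i+1)) < p*q" using bx' pq by (simp add: g_bound)
  show "g p q (x i) (x (i + 1)) mod p = g p q (x' i) (x' (i + 1)) mod p"
    using bx bx' pq e1 by (simp add: g_mod_p)
  have "F p q x (i+1) div p = g p q (x i) (x (i+1)) mod q"
    unfolding F_def using bx pq by (simp add: g_div_p g_bound)
  moreover have "F p q x' (i+1) div p = g p q (x' i) (x' (i+1)) mod q"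
    unfolding F_def using bx' pq by (simp add: g_div_p g_bound)
  ultimately show "g p q (x i) (x (i + 1)) mod q = g p q (x' i) (x' (i + 1)) mod q"
    using e2 by simp
qed

lemma M:
  assumes cp: "coprime p q" and pq: "0 < p" "0 < q"
    and bx: "\<forall>j. x j < p*q" and bx': "\<forall>j. x' j < p*q"
    and e1: "x (i+1) = x' (i+1)" and e2: "F p q x (i+1) = F p q x' (i+1)"
  shows "x i mod q = x' i mod q"
proof -
  have "g p q (x i) (x (i+1)) div p = g p q (x' i) (x' (i+1)) div p"
    using key_u[OF assms] by simp
  thus ?thesis using bx bx' pq by (simp add: g_div_p)
qed

lemma M':
  assumes cp: "coprime p q" and pq: "0 < p" "0 < q"
    and bx: "\<forall>j. x j < p*q" and bx': "\<forall>j. x' j < p*q"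
    and e1: "x (i+1) = x' (i+1)" and e2: "F p q x (i+1) = F p q x' (i+1)"
  shows "F p q x i mod p = F p q x' i mod p"
proof -
  have u: "g p q (x i) (x (i+1)) = g p q (x' i) (x' (i+1))"
    using key_u[OF assms] .
  have "F p q x i mod p = g p q (x i) (x (i+1)) div q"
    unfolding F_def using bx pq by (simp add: g_mod_p g_bound)
  moreover have "F p q x' i mod p = g p q (x' i) (x' (i+1)) div q"
    unfolding F_def using bx' pq by (simp add: g_mod_p g_bound)
  ultimately show ?thesis using u by simp
qed

theorem proposition1:
  fixes p q :: nat and c c' :: "int \<Rightarrow> nat" and k i :: int
  assumes "p \<ge> 2" and "q \<ge> 2" and "coprime p q"
    and "\<forall>j. c j < p * q" and "\<forall>j. c' j < p * q"
    and "\<forall>m \<in> {k - 1, k, k + 1}. Fpow p q m c (i + 1) = Fpow p q m c' (i + 1)"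
  shows "Fpow p q k c i = Fpow p q k c' i"
proof -
  have p0: "0 < p" and q0: "0 < q" using assms by auto
  have cp: "coprime p q" and cq: "coprime q p" using assms(3) by (auto simp: coprime_commute)
  have h1: "Fpow p q (k-1) c (i+1) = Fpow p q (k-1) c' (i+1)"
   and h2: "Fpow p q k c (i+1) = Fpow p q k c' (i+1)"
   and h3: "Fpow p q (k+1) c (i+1) = Fpow p q (k+1) c' (i+1)" using assms(6) by auto
  have bnd: "\<And>n. \<forall>j. (F p q ^^ n) c j < p*q" "\<And>n. \<forall>j. (F p q ^^ n) c' j < p*q"
    "\<And>n. \<forall>j. (F q p ^^ n) c j < p*q" "\<And>n. \<forall>j. (F q p ^^ n) c' j < p*q"
    using pow_bound pow_bound' assms(4,5) p0 q0 by blast+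
  have bnd2: "\<And>n. \<forall>j. (F q p ^^ n) c j < q*p" "\<And>n. \<forall>j. (F q p ^^ n) c' j < q*p"
    using bnd by (simp_all add: mult.commute)
  consider "k \<ge> 1" | "k = 0" | "k \<le> -1" by linarith
  then show ?thesis
  proof cases
    case 1
    define n where "n = nat (k-1)"
    have nk: "nat k = Suc n" "nat (k+1) = Suc (Suc n)" using 1 by (auto simp: n_def)
    define x where "x = (F p q ^^ n) c"
    define x' where "x' = (F p q ^^ n) c'"
    have bx: "\<forall>j. x j < p*q" "\<forall>j. x' j < p*q" using bnd by (auto simp: x_def x'_def)
    have byy: "\<forall>j. F p q x j < p*q" "\<forall>j. F p q x' j < p*q"
      using bx F_bound q0 by blast+
    have E1: "x (i+1) = x' (i+1)" using h1 1 by (simp add: Fpow_def x_def x'_def n_def)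
    have E2: "F p q x (i+1) = F p q x' (i+1)" using h2 1 nk by (simp add: Fpow_def x_def x'_def)
    have E3: "F p q (F p q x) (i+1) = F p q (F p q x') (i+1)"
      using h3 1 nk by (simp add: Fpow_def x_def x'_def)
    have "F p q x i mod q = F p q x' i mod q" using M[OF cp p0 q0 byy E2 E3] .
    moreover have "F p q x i mod p = F p q x' i mod p" using M'[OF cp p0 q0 bx E1 E2] .
    ultimately have "F p q x i = F p q x' i" using crt[OF cp] byy by blast
    thus ?thesis using 1 nk by (simp add: Fpow_def x_def x'_def)
  next
    case 2
    have E1: "F q p c (i+1) = F q p c' (i+1)" using h1 2 by (simp add: Fpow_def)
    have E2: "c (i+1) = c' (i+1)" using h2 2 by (simp add: Fpow_def)
    have E3: "F p q c (i+1) = F p q c' (i+1)" using h3 2 by (simp add: Fpow_def)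
    have bc: "\<forall>j. c j < q*p" "\<forall>j. c' j < q*p" using assms(4,5) by (simp_all add: mult.commute)
    have "c i mod q = c' i mod q" using M[OF cp p0 q0 assms(4,5) E2 E3] .
    moreover have "c i mod p = c' i mod p" using M[OF cq q0 p0 bc E2 E1] .
    ultimately have "c i = c' i" using crt[OF cp] assms(4,5) by blast
    thus ?thesis using 2 by (simp add: Fpow_def)
  next
    case 3
    define n where "n = nat (-k-1)"
    have nk: "nat (-k) = Suc n" "nat (-(k-1)) = Suc (Suc n)" using 3 by (auto simp: n_def)
    define f where "f = (F q p ^^ n) c"
    define f' where "f' = (F q p ^^ n) c'"
    have bf: "\<forall>j. f j < q*p" "\<forall>j. f' j < q*p" using bnd2 by (auto simp: f_def f'_def)
    have be: "\<forall>j. F q p f j < q*p" "\<forall>j. F q p f' j < q*p"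
      using bf F_bound p0 by blast+
    have E3: "f (i+1) = f' (i+1)"
    proof (cases "k = -1")
      case True thus ?thesis using h3 by (simp add: Fpow_def f_def f'_def n_def)
    next
      case False thus ?thesis using h3 3 by (simp add: Fpow_def f_def f'_def n_def)
    qed
    have E2: "F q p f (i+1) = F q p f' (i+1)" using h2 3 nk by (simp add: Fpow_def f_def f'_def)
    have E1: "F q p (F q p f) (i+1) = F q p (F q p f') (i+1)"
      using h1 3 nk by (simp add: Fpow_def f_def f'_def)
    have "F q p f i mod p = F q p f' i mod p" using M[OF cq q0 p0 be E2 E1] .
    moreover have "F q p f i mod q = F q p f' i mod q" using M'[OF cq q0 p0 bf E3 E2] .
    ultimately have "F q p f i = F q p f' i" using crt[OF cp] be by (simp add: mult.commute)
    thus ?thesis using 3 nk by (simp add: Fpow_def f_def f'_def)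
  qed
qed

end
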